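(* For every graph $G$ there exists a graph $H$ such that $|H|=|G|+1$, $G$ is an induced subgraph of $H$, and $\alpha_{\mathrm{od}}(H)=\alpha(H)=\alpha(G)+1$.
   Context: An odd independent set in $G=(V,E)$ is an independent set $S$ such that every $v\in V\setminus S$ has either no neighbor or an odd number of neighbors in $S$; $\alpha_{\mathrm{od}}(G)$ is its maximum size; $\alpha$ is the independence number; $|G|$ is the number of vertices. *)

theory Defs
  imports Main
begin

definition graph :: "'a set \<Rightarrow> ('a \<times> 'a) set \<Rightarrow> bool" where
  "graph V E \<longleftrightarrow> finite V \<and> E \<subseteq> V \<times> V \<and> sym E \<and> irrefl E"

definition indep_set :: "'a set \<Rightarrow> ('a \<times> 'a) set \<Rightarrow> 'a set \<Rightarrow> bool" where
  "indep_set V E S \<longleftrightarrow> S \<subseteq> V \<and> (\<forall>u\<in>S. \<forall>v\<in>S. (u, v) \<notin> E)"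

definition odd_indep_set :: "'a set \<Rightarrow> ('a \<times> 'a) set \<Rightarrow> 'a set \<Rightarrow> bool" where
  "odd_indep_set V E S \<longleftrightarrow> indep_set V E S \<and>
     (\<forall>v\<in>V - S. card {u\<in>S. (v, u) \<in> E} = 0 \<or> odd (card {u\<in>S. (v, u) \<in> E}))"

definition alpha :: "'a set \<Rightarrow> ('a \<times> 'a) set \<Rightarrow> nat" where
  "alpha V E = Max (card ` {S. indep_set V E S})"

definition alpha_od :: "'a set \<Rightarrow> ('a \<times> 'a) set \<Rightarrow> nat" where
  "alpha_od V E = Max (card ` {S. odd_indep_set V E S})"

definition induced_subgraph_of ::
  "'a set \<Rightarrow> ('a \<times> 'a) set \<Rightarrow> 'b set \<Rightarrow> ('b \<times> 'b) set \<Rightarrow> bool" where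
  "induced_subgraph_of V E W F \<longleftrightarrow>
     (\<exists>f. inj_on f V \<and> f ` V \<subseteq> W \<and>
          (\<forall>u\<in>V. \<forall>v\<in>V. ((u, v) \<in> E \<longleftrightarrow> (f u, f v) \<in> F)))"

end

theory Submission
  imports Defs
begin

lemma max_card_eq:
  assumes "\<And>S. P S \<Longrightarrow> card S \<le> n" "P S0" "card S0 = n"
  shows "Max (card ` {S. P S}) = n"
proof -
  have "card ` {S. P S} \<subseteq> {..n}" using assms(1) by auto
  hence "finite (card ` {S. P S})" using finite_subset by blast
  thus ?thesis using assms by (intro Max_eqI) auto
qed

theorem proposition17:
  fixes V :: "'a set" and E :: "('a \<times> 'a) set"
  assumes "graph V E"
  shows "\<exists>(W :: 'a option set) F. graph W F \<and> card W = card V + 1 \<and>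
           induced_subgraph_of V E W F \<and>
           alpha_od W F = alpha W F \<and> alpha W F = alpha V E + 1"
proof -
  have fin: "finite V" and EV: "E \<subseteq> V \<times> V" and symE: "sym E" and irr: "irrefl E"
    using assms by (auto simp: graph_def)
  have "{S. indep_set V E S} \<subseteq> Pow V" by (auto simp: indep_set_def)
  hence "finite {S. indep_set V E S}" using fin by (meson finite_Pow_iff finite_subset)
  hence finc: "finite (card ` {S. indep_set V E S})" by simp
  have ne: "card ` {S. indep_set V E S} \<noteq> {}"
    using indep_set_def[of V E "{}"] by auto
  have "alpha V E \<in> card ` {S. indep_set V E S}"
    unfolding alpha_def using Max_in[OF finc ne] .
  then obtain I where I: "indep_set V E I" "card I = alpha V E" by auto
  have bnd: "card S \<le> alpha V E" if "indep_set V E S" for S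
    unfolding alpha_def using finc that by (intro Max_ge) auto
  have IV: "I \<subseteq> V" using I by (auto simp: indep_set_def)
  hence finI: "finite I" using fin finite_subset by blast
  define B where "B = {v\<in>V-I. even (card {u\<in>I. (v,u)\<in>E})}"
  define W :: "'a option set" where "W = insert None (Some ` V)"
  define F where "F = (\<lambda>(u,v). (Some u, Some v)) ` E \<union> (\<lambda>v. (None, Some v)) ` B
      \<union> (\<lambda>v. (Some v, None)) ` B"
  have BV: "B \<subseteq> V" by (auto simp: B_def)
  have SF: "(Some u, Some v) \<in> F \<longleftrightarrow> (u,v) \<in> E" for u v by (auto simp: F_def)
  have NF1: "(None, Some v) \<in> F \<longleftrightarrow> v \<in> B" for v by (auto simp: F_def)
  have NF2: "(Some v, None) \<in> F \<longleftrightarrow> v \<in> B" for v by (auto simp: F_def)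
  have NN: "(None, None) \<notin> F" by (auto simp: F_def)
  have gH: "graph W F"
    unfolding graph_def
  proof (intro conjI)
    show "finite W" using fin by (simp add: W_def)
    show "F \<subseteq> W \<times> W" using EV BV by (auto simp: F_def W_def)
    show "sym F"
      unfolding sym_def
    proof (intro allI impI)
      fix x y assume "(x,y) \<in> F"
      then show "(y,x) \<in> F" using symE
        by (cases x; cases y) (auto simp: SF NF1 NF2 NN dest: symD)
    qed
    show "irrefl F" unfolding irrefl_def
    proof
      fix x show "(x,x) \<notin> F" using irr
        by (cases x) (auto simp: SF NN irrefl_def)
    qed
  qed
  have cW: "card W = card V + 1"
    using fin by (simp add: W_def card_image)
  have ind: "induced_subgraph_of V E W F"
    unfolding induced_subgraph_of_def
    by (rule exI[of _ Some]) (auto simp: W_def SF)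
  have hb: "card T \<le> alpha V E + 1" if "indep_set W F T" for T
  proof -
    define S where "S = {v. Some v \<in> T}"
    have TW: "T \<subseteq> W" using that by (auto simp: indep_set_def)
    have "indep_set V E S" using that TW
      unfolding indep_set_def S_def W_def using SF by blast
    hence "card S \<le> alpha V E" by (rule bnd)
    have "T \<subseteq> insert None (Some ` S)"
    proof
      fix x assume "x \<in> T" thus "x \<in> insert None (Some ` S)"
        by (cases x) (auto simp: S_def)
    qed
    moreover have "finite S" using \<open>indep_set V E S\<close> fin
      by (auto simp: indep_set_def intro: finite_subset)
    ultimately have "card T \<le> card (insert None (Some ` S))"
      by (intro card_mono) auto
    also have "\<dots> \<le> card S + 1"
      by (metis Suc_eq_plus1 card_image_le card_insert_le_m1 finite_imageI \<open>finite S\<close>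
          le_add_diff_inverse2 card_insert_if Suc_le_mono le_SucI order_refl)
    finally show ?thesis using \<open>card S \<le> alpha V E\<close> by linarith
  qed
  define J where "J = insert None (Some ` I)"
  have cJ: "card J = alpha V E + 1"
    using finI I(2) by (simp add: J_def card_image)
  have iJ: "indep_set W F J"
    using IV I(1) unfolding indep_set_def J_def W_def
    by (auto simp: SF NF1 NF2 NN B_def)
  have oJ: "odd_indep_set W F J"
    unfolding odd_indep_set_def
  proof (intro conjI ballI iJ)
    fix w assume w: "w \<in> W - J"
    then obtain v where wv: "w = Some v" "v \<in> V - I" by (auto simp: W_def J_def)
    define c where "c = card {u\<in>I. (v,u)\<in>E}"
    have eq: "{u\<in>J. (w, u) \<in> F} = Some ` {u\<in>I. (v,u)\<in>E} \<union> (if even c then {None} else {})"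
      using wv by (auto simp: J_def SF NF2 B_def c_def)
    have "card {u\<in>J. (w, u) \<in> F} = (if even c then c + 1 else c)"
      unfolding eq using finI by (auto simp: card_image c_def)
    thus "card {u\<in>J. (w, u) \<in> F} = 0 \<or> odd (card {u\<in>J. (w, u) \<in> F})" by auto
  qed
  have aH: "alpha W F = alpha V E + 1"
    unfolding alpha_def[of W F] by (rule max_card_eq[where P="indep_set W F", OF hb iJ cJ])
  have aoH: "alpha_od W F = alpha V E + 1"
    unfolding alpha_od_def
    by (rule max_card_eq[where P="odd_indep_set W F", OF _ oJ cJ]) (meson hb odd_indep_set_def)
  show ?thesis
    by (rule exI[of _ W], rule exI[of _ F]) (simp add: gH cW ind aH aoH)
qed

end
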